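(* Let $d\ge2$ and let $v=(v_1,\dots,v_d)\in\mathbb{R}^d$ satisfy $\sum_j v_j=1$ and $\sum_j v_j^2=d$. Then $\|v\|_1=\sum_j|v_j|\le d$ if $d$ is odd and $\|v\|_1\le\sqrt{d^2-1}$ if $d$ is even. When $d$ is odd, equality holds if and only if $v$ has $(d+1)/2$ components equal to $1$ and $(d-1)/2$ components equal to $-1$. When $d$ is even, equality holds if and only if $v$ has $d/2$ components equal to $(1+\sqrt{d^2-1})/d$ and $d/2$ components equal to $(1-\sqrt{d^2-1})/d$. *)

theory Defs
  imports "HOL-Analysis.Analysis"
begin

end

theory Submission
  imports Defs
begin

lemma sq_dev:
  fixes v :: "nat \<Rightarrow> real"
  assumes "finite S"
  shows "(\<Sum>j\<in>S. (v j - m)^2) = (\<Sum>j\<in>S. (v j)^2) - 2*m*(\<Sum>j\<in>S. v j) + real (card S) * m^2"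
proof -
  have "(\<Sum>j\<in>S. (v j - m)^2) = (\<Sum>j\<in>S. (v j)^2 - 2*m * v j + m^2)"
    by (rule sum.cong) (auto simp: power2_diff)
  also have "\<dots> = (\<Sum>j\<in>S. (v j)^2) - (\<Sum>j\<in>S. 2*m * v j) + (\<Sum>j\<in>S. m^2)"
    by (simp add: sum.distrib sum_subtractf)
  also have "(\<Sum>j\<in>S. 2*m * v j) = 2*m*(\<Sum>j\<in>S. v j)" by (simp add: sum_distrib_left)
  finally show ?thesis by simp
qed

lemma cs_le:
  fixes v :: "nat \<Rightarrow> real"
  assumes "finite S"
  shows "(\<Sum>j\<in>S. v j)^2 \<le> real (card S) * (\<Sum>j\<in>S. (v j)^2)"
proof (cases "card S = 0")
  case True then show ?thesis using assms by simp
next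
  case False
  define k where "k = real (card S)"
  have k: "k > 0" using False k_def by simp
  define A where "A = (\<Sum>j\<in>S. v j)"
  define Q where "Q = (\<Sum>j\<in>S. (v j)^2)"
  have "0 \<le> (\<Sum>j\<in>S. (v j - A/k)^2)" by (intro sum_nonneg) simp
  also have "\<dots> = Q - 2*(A/k)*A + k*(A/k)^2" using sq_dev[OF assms] A_def Q_def k_def by simp
  also have "\<dots> = (k*Q - A^2)/k" using k by (simp add: field_simps power2_eq_square)
  finally have "0 \<le> (k*Q - A^2)/k" .
  hence "0 \<le> k*Q - A^2" using k by (simp add: zero_le_divide_iff)
  then show ?thesis unfolding A_def Q_def k_def by linarith
qed

lemma cs_eq:
  fixes v :: "nat \<Rightarrow> real"
  assumes "finite S" "card S > 0" "(\<Sum>j\<in>S. v j)^2 = real (card S) * (\<Sum>j\<in>S. (v j)^2)"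
  shows "\<forall>j\<in>S. v j = (\<Sum>j\<in>S. v j) / real (card S)"
proof -
  define k where "k = real (card S)"
  have k: "k > 0" using assms k_def by simp
  define A where "A = (\<Sum>j\<in>S. v j)"
  define Q where "Q = (\<Sum>j\<in>S. (v j)^2)"
  have "(\<Sum>j\<in>S. (v j - A/k)^2) = Q - 2*(A/k)*A + k*(A/k)^2" using sq_dev[OF assms(1)] A_def Q_def k_def by simp
  also have "\<dots> = (k*Q - A^2)/k" using k by (simp add: field_simps power2_eq_square)
  also have "\<dots> = 0" using assms(3) unfolding A_def Q_def k_def by (simp only: diff_self div_0)
  finally have "(\<Sum>j\<in>S. (v j - A/k)^2) = 0" .
  hence "\<forall>j\<in>S. (v j - A/k)^2 = 0" using sum_nonneg_eq_0_iff[OF assms(1), of "\<lambda>j. (v j - A/k)^2"] by auto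
  hence "\<forall>j\<in>S. v j = A/k" by auto
  then show ?thesis unfolding A_def k_def .
qed

lemma two_vals:
  fixes v :: "nat \<Rightarrow> real"
  assumes "card {j. j<d \<and> v j = a} + card {j. j<d \<and> v j = b} = d" "a \<noteq> b"
  shows "(\<Sum>j<d. f (v j)) = real (card {j. j<d \<and> v j = a}) * f a + real (card {j. j<d \<and> v j = b}) * f b"
proof -
  let ?S1 = "{j. j<d \<and> v j = a}" and ?S2 = "{j. j<d \<and> v j = b}"
  have f1: "finite ?S1" "finite ?S2" by auto
  have dj: "?S1 \<inter> ?S2 = {}" using assms(2) by auto
  have "card (?S1 \<union> ?S2) = d" using card_Un_disjoint[OF f1 dj] assms(1) by simp
  moreover have "?S1 \<union> ?S2 \<subseteq> {..<d}" by auto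
  ultimately have U: "?S1 \<union> ?S2 = {..<d}" using card_subset_eq[of "{..<d}" "?S1 \<union> ?S2"] by simp
  have "(\<Sum>j<d. f (v j)) = (\<Sum>j\<in>?S1. f (v j)) + (\<Sum>j\<in>?S2. f (v j))"
    using sum.union_disjoint[OF f1 dj, of "\<lambda>j. f (v j)"] U by simp
  also have "(\<Sum>j\<in>?S1. f (v j)) = (\<Sum>j\<in>?S1. f a)" by (rule sum.cong) auto
  also have "(\<Sum>j\<in>?S2. f (v j)) = (\<Sum>j\<in>?S2. f b)" by (rule sum.cong) auto
  finally show ?thesis by simp
qed

lemma half_div: "(x/2)/(y/2) = x/(y::real)"
  by simp

lemma bound_lemma:
  fixes A c p n d :: real
  assumes "d*A^2 - 2*p*A + p - p*n*d \<le> 0" "d*c^2 - 2*p*c + p - p*n*d \<ge> 0" "d*c \<ge> p" "d > 0"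
  shows "A \<le> c"
proof (rule ccontr)
  assume "\<not> A \<le> c"
  hence Ac: "A > c" by simp
  have "d*A > d*c" using Ac assms(4) by simp
  hence "d*(A+c) - 2*p > 0" using assms(3) by (simp add: algebra_simps)
  hence "(A - c)*(d*(A+c) - 2*p) > 0" using Ac by simp
  moreover have "(A - c)*(d*(A+c) - 2*p) = (d*A^2 - 2*p*A + p - p*n*d) - (d*c^2 - 2*p*c + p - p*n*d)"
    by (simp add: algebra_simps power2_eq_square)
  ultimately show False using assms(1,2) by linarith
qed


theorem lemmaS2:
  fixes d :: nat and v :: "nat \<Rightarrow> real"
  assumes "d \<ge> 2"
    and "(\<Sum>j<d. v j) = 1"
    and "(\<Sum>j<d. (v j)^2) = real d"
  shows "(odd d \<longrightarrow>
            (\<Sum>j<d. \<bar>v j\<bar>) \<le> real d \<and>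
            ((\<Sum>j<d. \<bar>v j\<bar>) = real d \<longleftrightarrow>
               card {j. j < d \<and> v j = 1} = (d + 1) div 2 \<and>
               card {j. j < d \<and> v j = -1} = (d - 1) div 2))
       \<and> (even d \<longrightarrow>
            (\<Sum>j<d. \<bar>v j\<bar>) \<le> sqrt ((real d)^2 - 1) \<and>
            ((\<Sum>j<d. \<bar>v j\<bar>) = sqrt ((real d)^2 - 1) \<longleftrightarrow>
               card {j. j < d \<and> v j = (1 + sqrt ((real d)^2 - 1)) / real d} = d div 2 \<and>
               card {j. j < d \<and> v j = (1 - sqrt ((real d)^2 - 1)) / real d} = d div 2))"
proof -
  define P where "P = {j. j<d \<and> v j \<ge> 0}"
  define N where "N = {j. j<d \<and> v j < 0}"
  have fP: "finite P" and fN: "finite N" unfolding P_def N_def by auto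
  have U: "{..<d} = P \<union> N" unfolding P_def N_def by auto
  have D: "P \<inter> N = {}" unfolding P_def N_def by auto
  have split: "\<And>f::nat\<Rightarrow>real. (\<Sum>j<d. f j) = (\<Sum>j\<in>P. f j) + (\<Sum>j\<in>N. f j)"
    using sum.union_disjoint[OF fP fN D] U by simp
  have cPN: "card P + card N = d" using card_Un_disjoint[OF fP fN D] U[symmetric] by simp
  define p where "p = real (card P)"
  define n where "n = real (card N)"
  define A where "A = (\<Sum>j\<in>P. v j)"
  define B where "B = - (\<Sum>j\<in>N. v j)"
  define Q1 where "Q1 = (\<Sum>j\<in>P. (v j)^2)"
  define Q2 where "Q2 = (\<Sum>j\<in>N. (v j)^2)"
  have AB: "B = A - 1" using split[of v] assms(2) unfolding A_def B_def by simp
  have QQ: "Q2 = real d - Q1" using split[of "\<lambda>j. (v j)^2"] assms(3) unfolding Q1_def Q2_def by simp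
  have sP: "(\<Sum>j\<in>P. \<bar>v j\<bar>) = A" unfolding A_def by (rule sum.cong) (auto simp: P_def)
  have sN0: "(\<Sum>j\<in>N. \<bar>v j\<bar>) = (\<Sum>j\<in>N. - v j)" by (rule sum.cong) (auto simp: N_def)
  have sN: "(\<Sum>j\<in>N. \<bar>v j\<bar>) = B" unfolding sN0 B_def by (simp add: sum_negf)
  have L: "(\<Sum>j<d. \<bar>v j\<bar>) = 2*A - 1" using split[of "\<lambda>j. \<bar>v j\<bar>"] sP sN AB by simp
  have pn: "real d = p + n" using cPN unfolding p_def n_def by simp
  have p0: "p \<ge> 0" and n0: "n \<ge> 0" unfolding p_def n_def by auto
  have E1: "p*Q1 - A^2 \<ge> 0" using cs_le[OF fP, of v] unfolding p_def Q1_def A_def by simp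
  have E2: "n*Q2 - B^2 \<ge> 0" using cs_le[OF fN, of v] unfolding n_def Q2_def B_def by simp
  have dpos: "real d > 0" using assms(1) by simp
  define G where "G = (\<lambda>x. real d*x^2 - 2*p*x + p - p*n*real d)"
  have GA: "G A = - (n*(p*Q1 - A^2) + p*(n*Q2 - B^2))"
    unfolding G_def AB QQ pn by (simp add: algebra_simps power2_eq_square)
  have T1: "n*(p*Q1 - A^2) \<ge> 0" using E1 n0 by simp
  have T2: "p*(n*Q2 - B^2) \<ge> 0" using E2 p0 by simp
  have GA0: "G A \<le> 0" using GA T1 T2 by linarith
  have pd: "p \<le> real d" using pn n0 by linarith
  have Lc: "\<And>c. c \<ge> 1 \<Longrightarrow> G c \<ge> 0 \<Longrightarrow> A \<le> c"
  proof -
    fix c :: real assume c1: "c \<ge> 1" and gc: "G c \<ge> 0"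
    have "real d * c \<ge> real d * 1" using c1 dpos by (intro mult_left_mono) auto
    hence "real d * c \<ge> p" using pd by simp
    then show "A \<le> c" using bound_lemma[of "real d" A p n c] GA0 gc dpos unfolding G_def by simp
  qed
  have Eq: "\<And>c. A = c \<Longrightarrow> G c \<ge> 0 \<Longrightarrow> G c = 0 \<and> (n > 0 \<longrightarrow> p*Q1 = A^2) \<and> (p > 0 \<longrightarrow> n*Q2 = B^2)"
  proof -
    fix c assume Ac: "A = c" and gc: "G c \<ge> 0"
    have g0: "G c = 0" using Ac gc GA0 by simp
    have gA: "G A = 0" using g0 Ac by simp
    have "n*(p*Q1 - A^2) = 0" using gA GA T1 T2 by linarith
    moreover have "p*(n*Q2 - B^2) = 0" using gA GA T1 T2 by linarith
    ultimately show "G c = 0 \<and> (n > 0 \<longrightarrow> p*Q1 = A^2) \<and> (p > 0 \<longrightarrow> n*Q2 = B^2)" using g0 by auto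
  qed
  have valsP: "\<forall>j\<in>P. v j = A / p" if a: "p > 0" and b: "p*Q1 = A^2"
  proof -
    have c: "card P > 0" using a unfolding p_def by simp
    have e: "(\<Sum>j\<in>P. v j)^2 = real (card P) * (\<Sum>j\<in>P. (v j)^2)" using b unfolding p_def Q1_def A_def by (rule sym)
    show ?thesis unfolding A_def p_def by (rule cs_eq[OF fP c e])
  qed
  have valsN: "\<forall>j\<in>N. v j = - B / n" if a: "n > 0" and b: "n*Q2 = B^2"
  proof -
    have c: "card N > 0" using a unfolding n_def by simp
    have e: "(\<Sum>j\<in>N. v j)^2 = real (card N) * (\<Sum>j\<in>N. (v j)^2)" using b unfolding n_def Q2_def B_def by simp
    have X: "\<forall>j\<in>N. v j = (\<Sum>j\<in>N. v j) / real (card N)" by (rule cs_eq[OF fN c e])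
    have Y: "- B / n = (\<Sum>j\<in>N. v j) / real (card N)" unfolding B_def n_def by simp
    show ?thesis unfolding Y by (rule X)
  qed
  have PN: "\<And>j. j < d \<Longrightarrow> j \<in> P \<or> j \<in> N" unfolding P_def N_def by auto
  have Pd: "\<And>j. j \<in> P \<Longrightarrow> j < d" unfolding P_def by auto
  have Nd: "\<And>j. j \<in> N \<Longrightarrow> j < d" unfolding N_def by auto
  have setP: "{j. j < d \<and> v j = a} = P" if h1: "\<forall>j\<in>P. v j = a" and h2: "\<forall>j\<in>N. v j = b" and h3: "a \<noteq> b" for a b
  proof (intro equalityI subsetI)
    fix x assume "x \<in> {j. j < d \<and> v j = a}"
    hence x: "x < d" "v x = a" by simp_all
    show "x \<in> P"
    proof (rule ccontr)
      assume "x \<notin> P" hence "x \<in> N" using PN[OF x(1)] by blast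
      hence "v x = b" using h2 by blast
      then show False using x(2) h3 by simp
    qed
  next
    fix x assume x: "x \<in> P"
    show "x \<in> {j. j < d \<and> v j = a}" using Pd[OF x] h1 x by simp
  qed
  have setN: "{j. j < d \<and> v j = b} = N" if h1: "\<forall>j\<in>P. v j = a" and h2: "\<forall>j\<in>N. v j = b" and h3: "a \<noteq> b" for a b
  proof (intro equalityI subsetI)
    fix x assume "x \<in> {j. j < d \<and> v j = b}"
    hence x: "x < d" "v x = b" by simp_all
    show "x \<in> N"
    proof (rule ccontr)
      assume "x \<notin> N" hence "x \<in> P" using PN[OF x(1)] by blast
      hence "v x = a" using h1 by blast
      then show False using x(2) h3 by simp
    qed
  next
    fix x assume x: "x \<in> N"
    show "x \<in> {j. j < d \<and> v j = b}" using Nd[OF x] h2 x by simp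
  qed
  show ?thesis
  proof (intro conjI impI)
    assume od: "odd d"
    define c where "c = (real d + 1)/2"
    have c1: "c \<ge> 1" unfolding c_def using dpos by simp
    have gc: "G c = real d * (p - n - 1)^2 / 4"
      unfolding G_def c_def pn by (simp add: algebra_simps power2_eq_square divide_simps)
    have gc0: "G c \<ge> 0" unfolding gc using dpos by simp
    have Ale: "A \<le> c" using Lc[OF c1 gc0] .
    show "(\<Sum>j<d. \<bar>v j\<bar>) \<le> real d" using Ale L unfolding c_def by simp
    show "((\<Sum>j<d. \<bar>v j\<bar>) = real d) =
      (card {j. j < d \<and> v j = 1} = (d + 1) div 2 \<and> card {j. j < d \<and> v j = - 1} = (d - 1) div 2)"
    proof
      assume "(\<Sum>j<d. \<bar>v j\<bar>) = real d"
      hence Ac: "A = c" using L unfolding c_def by simp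
      from Eq[OF Ac gc0] have g0: "G c = 0" and e1: "n > 0 \<Longrightarrow> p*Q1 = A^2" and e2: "p > 0 \<Longrightarrow> n*Q2 = B^2" by auto
      have "(p - n - 1)^2 = 0" using g0 dpos unfolding gc by simp
      hence pn1: "p = n + 1" by simp
      have d3: "d \<ge> 3" using od assms(1) by presburger
      have npos: "n > 0" using pn pn1 d3 by simp
      have ppos: "p > 0" using pn1 n0 by simp
      have Ap: "A / p = 1" using Ac pn1 pn ppos unfolding c_def by (simp add: field_simps)
      have Bn: "- B / n = -1" using Ac AB pn1 pn npos unfolding c_def by (simp add: field_simps)
      have vP: "\<forall>j\<in>P. v j = 1" using valsP[OF ppos e1[OF npos]] Ap by simp
      have vN: "\<forall>j\<in>N. v j = -1" using valsN[OF npos e2[OF ppos]] Bn by simp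
      have S1: "{j. j < d \<and> v j = 1} = P" using setP[OF vP vN] by simp
      have S2: "{j. j < d \<and> v j = -1} = N" using setN[OF vP vN] by simp
      have "real (card P) = real (card N + 1)" using pn1 unfolding p_def n_def by simp
      hence "card P = card N + 1" by (simp only: of_nat_eq_iff)
      then show "card {j. j < d \<and> v j = 1} = (d + 1) div 2 \<and> card {j. j < d \<and> v j = - 1} = (d - 1) div 2"
        unfolding S1 S2 using cPN by presburger
    next
      assume cc: "card {j. j < d \<and> v j = 1} = (d + 1) div 2 \<and> card {j. j < d \<and> v j = - 1} = (d - 1) div 2"
      have sum: "card {j. j < d \<and> v j = 1} + card {j. j < d \<and> v j = - 1} = d" using cc od by presburger
      have "(\<Sum>j<d. \<bar>v j\<bar>) = real (card {j. j < d \<and> v j = 1}) * \<bar>1\<bar> + real (card {j. j < d \<and> v j = - 1}) * \<bar>-1\<bar>"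
        using two_vals[OF sum] by simp
      also have "\<dots> = real d" using sum by (simp flip: of_nat_add)
      finally show "(\<Sum>j<d. \<bar>v j\<bar>) = real d" .
    qed
  next
    assume ev: "even d"
    define s where "s = sqrt ((real d)^2 - 1)"
    have d2: "(real d)^2 \<ge> 4" using assms(1) 
    proof -
      have "real d \<ge> 2" using assms(1) by simp
      hence "(real d)^2 \<ge> 2^2" by (intro power_mono) auto
      then show ?thesis by simp
    qed
    have s2: "s^2 = (real d)^2 - 1" unfolding s_def using d2 by simp
    have s0: "s \<ge> 0" unfolding s_def using d2 by simp
    have s1: "s > 1"
    proof (rule ccontr)
      assume "\<not> s > 1" hence "s^2 \<le> 1^2" using s0 by (intro power_mono) auto
      then show False using s2 d2 by simp
    qed
    have sd: "s < real d" using s2 dpos by (intro power_less_imp_less_base[of s 2]) auto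
    define c where "c = (1 + s)/2"
    have c1: "c \<ge> 1" unfolding c_def using s1 by simp
    define u where "u = p - real d / 2"
    have gcx: "G c - u*(real d*u - s) = real d * (s^2 - (real d)^2 + 1)/4"
      unfolding G_def c_def u_def pn by (simp add: algebra_simps power2_eq_square divide_simps)
    have gc: "G c = u*(real d*u - s)" using gcx s2 by simp
    define h where "h = d div 2"
    have hd: "real h = real d / 2" 
    proof -
      obtain k where "d = 2*k" using ev by blast
      then show ?thesis unfolding h_def by simp
    qed
    have ucase: "u \<ge> 1 \<or> u = 0 \<or> u \<le> -1"
    proof -
      have "card P \<ge> h + 1 \<or> card P = h \<or> card P + 1 \<le> h" by linarith
      then show ?thesis
      proof (elim disjE)
        assume "card P \<ge> h + 1" hence "p \<ge> real h + 1" unfolding p_def by simp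
        then show ?thesis unfolding u_def using hd by simp
      next
        assume "card P = h" then show ?thesis unfolding u_def p_def using hd by simp
      next
        assume "card P + 1 \<le> h" hence "p + 1 \<le> real h" unfolding p_def by simp
        then show ?thesis unfolding u_def using hd by simp
      qed
    qed
    have gpos: "u \<noteq> 0 \<Longrightarrow> G c > 0"
    proof -
      assume u0: "u \<noteq> 0"
      show "G c > 0" using ucase
      proof (elim disjE)
        assume u1: "u \<ge> 1"
        have "real d * u \<ge> real d * 1" using u1 dpos by (intro mult_left_mono) auto
        hence "real d * u - s > 0" using sd by simp
        then show ?thesis unfolding gc using u1 by simp
      next
        assume "u = 0" then show ?thesis using u0 by simp
      next
        assume u1: "u \<le> -1"
        have "real d * u \<le> real d * (-1)" using u1 dpos by (intro mult_left_mono) auto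
        hence "real d * u - s < 0" using s0 dpos by simp
        then show ?thesis unfolding gc using u1 by (simp add: mult_neg_neg)
      qed
    qed
    have gc0: "G c \<ge> 0" using gpos gc by (cases "u = 0") auto
    have Ale: "A \<le> c" using Lc[OF c1 gc0] .
    show "(\<Sum>j<d. \<bar>v j\<bar>) \<le> sqrt ((real d)^2 - 1)" using Ale L unfolding c_def s_def by simp
    have a_ne: "(1 + s) / real d \<noteq> (1 - s) / real d" using s1 dpos by (simp add: divide_simps)
    show "((\<Sum>j<d. \<bar>v j\<bar>) = sqrt ((real d)^2 - 1)) =
      (card {j. j < d \<and> v j = (1 + sqrt ((real d)^2 - 1)) / real d} = d div 2 \<and>
       card {j. j < d \<and> v j = (1 - sqrt ((real d)^2 - 1)) / real d} = d div 2)"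
      unfolding s_def[symmetric] h_def[symmetric]
    proof
      assume "(\<Sum>j<d. \<bar>v j\<bar>) = s"
      hence Ac: "A = c" using L unfolding c_def by simp
      from Eq[OF Ac gc0] have g0: "G c = 0" and e1: "n > 0 \<Longrightarrow> p*Q1 = A^2" and e2: "p > 0 \<Longrightarrow> n*Q2 = B^2" by auto
      have u0: "u = 0" using gpos g0 by force
      have ph: "p = real d / 2" using u0 unfolding u_def by simp
      have nh: "n = real d / 2" using ph pn by simp
      have npos: "n > 0" using nh dpos by simp
      have ppos: "p > 0" using ph dpos by simp
      have Ap: "A / p = (1 + s) / real d"
      proof -
        have "A / p = ((1 + s)/2) / (real d/2)" unfolding Ac ph c_def by (rule refl)
        then show ?thesis unfolding half_div .
      qed
      have Bn: "- B / n = (1 - s) / real d"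
      proof -
        have e: "-((1 + s)/2 - 1) = (1 - s)/2" by (simp add: field_simps)
        have "- B / n = ((1 - s)/2) / (real d/2)" unfolding AB Ac nh c_def e[symmetric] by simp
        then show ?thesis unfolding half_div .
      qed
      have vP: "\<forall>j\<in>P. v j = (1 + s) / real d" using valsP[OF ppos e1[OF npos]] Ap by simp
      have vN: "\<forall>j\<in>N. v j = (1 - s) / real d" using valsN[OF npos e2[OF ppos]] Bn by simp
      have S1: "{j. j < d \<and> v j = (1 + s) / real d} = P" using setP[OF vP vN a_ne] by simp
      have S2: "{j. j < d \<and> v j = (1 - s) / real d} = N" using setN[OF vP vN a_ne] by simp
      have "card P = h" "card N = h" using ph nh hd unfolding p_def n_def by simp_all
      then show "card {j. j < d \<and> v j = (1 + s) / real d} = h \<and> card {j. j < d \<and> v j = (1 - s) / real d} = h"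
        unfolding S1 S2 by simp
    next
      assume cc: "card {j. j < d \<and> v j = (1 + s) / real d} = h \<and> card {j. j < d \<and> v j = (1 - s) / real d} = h"
      have sum: "card {j. j < d \<and> v j = (1 + s) / real d} + card {j. j < d \<and> v j = (1 - s) / real d} = d"
        using cc ev unfolding h_def by presburger
      have ab1: "\<bar>(1 + s) / real d\<bar> = (1 + s) / real d" using s0 dpos by simp
      have ab2: "\<bar>(1 - s) / real d\<bar> = (s - 1) / real d" using s1 dpos by (simp add: abs_if divide_simps)
      have "(\<Sum>j<d. \<bar>v j\<bar>) = real h * \<bar>(1 + s) / real d\<bar> + real h * \<bar>(1 - s) / real d\<bar>"
        using two_vals[OF sum a_ne, of abs] cc by simp
      also have "\<dots> = s" unfolding ab1 ab2 hd using dpos by (simp add: field_simps)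
      finally show "(\<Sum>j<d. \<bar>v j\<bar>) = s" .
    qed
  qed
qed

end
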